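(* Let $G$ be a weighted graph as in the context. For every integer $m\geq1$, \[(q^G_m(x)-q^G_m(y))^2\leq \frac{12R_G(x,y)h_G^{-1}(\lceil m/2\rceil)}{m^2},\qquad\forall x,y\in V(G).\]
   Context: $G$ is a locally finite connected graph with at least two vertices, vertex set $V(G)$ and distinguished vertex $\rho=\rho(G)$; $\mu^G$ is a symmetric weight with $\mu^G_{xy}>0$ iff $\{x,y\}$ is an edge, $\mu^G_x:=\sum_y\mu^G_{xy}$, $\nu^G(A):=\sum_{x\in A}\mu^G_x$. The discrete time simple random walk $X^G$ has transition probabilities $P_G(x,y)=\mu^G_{xy}/\mu^G_x$ and law $\mathbf{P}^G_x$; $p^G_m(x,y):=\mathbf{P}^G_x(X^G_m=y)/\nu^G(\{y\})$, $q^G_m(x,y):=\frac12(p^G_m(x,y)+p^G_{m+1}(x,y))$, $q^G_m(x):=q^G_m(\rho,x)$. The generator is $\mathcal{L}_Gf(x)=\sum_yP_G(x,y)(f(y)-f(x))$, $(f,g)_G:=\sum_xf(x)g(x)\nu^G(\{x\})$, $\mathcal{E}_G(f,g):=-(\mathcal{L}_Gf,g)_G$, $\mathcal{F}_G:=\{f:\mathcal{E}_G(f,f)<\infty\}$. The resistance metric is \[R_G(x,y):=\sup\left\{\frac{|f(x)-f(y)|^2}{\mathcal{E}_G(f,f)}:f\in\mathcal{F}_G,\ \mathcal{E}_G(f,f)>0\right\}.\] Set $V_G(r):=\nu^G(\{x:R_G(\rho,x)\le r\})$, $h_G(r):=rV_G(r)$, and $h_G^{-1}(m):=\sup\{r:h_G(r)\le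 m\}$. *)

theory Defs
  imports "HOL-Analysis.Analysis"
begin

text \<open>The vertex set V(G) is the whole type 'a; mu is the symmetric edge weight,
  mu x y > 0 iff {x,y} is an edge.\<close>

definition weighted_graph :: "('a \<Rightarrow> 'a \<Rightarrow> real) \<Rightarrow> bool" where
  "weighted_graph mu \<longleftrightarrow>
     (\<forall>x y. 0 \<le> mu x y) \<and> (\<forall>x y. mu x y = mu y x) \<and>
     (\<forall>x. finite {y. 0 < mu x y}) \<and>
     (\<forall>x y. (x, y) \<in> {(a, b). 0 < mu a b}\<^sup>*) \<and>
     (\<exists>x y::'a. x \<noteq> y)"

definition mu_v :: "('a \<Rightarrow> 'a \<Rightarrow> real) \<Rightarrow> 'a \<Rightarrow> real" where
  "mu_v mu x = (\<Sum>y\<in>{y. 0 < mu x y}. mu x y)"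

definition nu :: "('a \<Rightarrow> 'a \<Rightarrow> real) \<Rightarrow> 'a set \<Rightarrow> ennreal" where
  "nu mu A = infsum (\<lambda>x. ennreal (mu_v mu x)) A"

definition trans_prob :: "('a \<Rightarrow> 'a \<Rightarrow> real) \<Rightarrow> 'a \<Rightarrow> 'a \<Rightarrow> real" where
  "trans_prob mu x y = mu x y / mu_v mu x"

fun walk_prob :: "('a \<Rightarrow> 'a \<Rightarrow> real) \<Rightarrow> nat \<Rightarrow> 'a \<Rightarrow> 'a \<Rightarrow> real" where
  "walk_prob mu 0 x y = (if x = y then 1 else 0)"
| "walk_prob mu (Suc m) x y =
     (\<Sum>z\<in>{z. 0 < mu x z}. trans_prob mu x z * walk_prob mu m z y)"

definition heat_kernel :: "('a \<Rightarrow> 'a \<Rightarrow> real) \<Rightarrow> nat \<Rightarrow> 'a \<Rightarrow> 'a \<Rightarrow> real" where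
  "heat_kernel mu m x y = walk_prob mu m x y / mu_v mu y"

definition qker :: "('a \<Rightarrow> 'a \<Rightarrow> real) \<Rightarrow> 'a \<Rightarrow> nat \<Rightarrow> 'a \<Rightarrow> real" where
  "qker mu \<rho> m x = (heat_kernel mu m \<rho> x + heat_kernel mu (Suc m) \<rho> x) / 2"

definition energy :: "('a \<Rightarrow> 'a \<Rightarrow> real) \<Rightarrow> ('a \<Rightarrow> real) \<Rightarrow> ennreal" where
  "energy mu f = infsum (\<lambda>(x, y). ennreal (mu x y * (f x - f y)^2 / 2)) UNIV"

definition resistance :: "('a \<Rightarrow> 'a \<Rightarrow> real) \<Rightarrow> 'a \<Rightarrow> 'a \<Rightarrow> real" where
  "resistance mu x y = Sup {\<bar>f x - f y\<bar>^2 / enn2real (energy mu f) | f.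
                            0 < energy mu f \<and> energy mu f < \<infinity>}"

definition vol_ball :: "('a \<Rightarrow> 'a \<Rightarrow> real) \<Rightarrow> 'a \<Rightarrow> real \<Rightarrow> ennreal" where
  "vol_ball mu \<rho> r = nu mu {x. resistance mu \<rho> x \<le> r}"

definition hfun :: "('a \<Rightarrow> 'a \<Rightarrow> real) \<Rightarrow> 'a \<Rightarrow> real \<Rightarrow> ennreal" where
  "hfun mu \<rho> r = ennreal r * vol_ball mu \<rho> r"

definition hinv :: "('a \<Rightarrow> 'a \<Rightarrow> real) \<Rightarrow> 'a \<Rightarrow> real \<Rightarrow> real" where
  "hinv mu \<rho> m = Sup {r. hfun mu \<rho> r \<le> ennreal m}"

end

theory Submission
  imports Defs
begin

definition nbr :: "('a \<Rightarrow> 'a \<Rightarrow> real) \<Rightarrow> 'a set \<Rightarrow> 'a set" where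
  "nbr mu A = A \<union> {y. \<exists>x\<in>A. 0 < mu x y}"

fun ballr :: "('a \<Rightarrow> 'a \<Rightarrow> real) \<Rightarrow> 'a \<Rightarrow> nat \<Rightarrow> 'a set" where
  "ballr mu x 0 = {x}"
| "ballr mu x (Suc k) = nbr mu (ballr mu x k)"

definition Pop :: "('a \<Rightarrow> 'a \<Rightarrow> real) \<Rightarrow> ('a \<Rightarrow> real) \<Rightarrow> 'a \<Rightarrow> real" where
  "Pop mu f x = (\<Sum>y\<in>{y. 0 < mu x y}. mu x y * f y) / mu_v mu x"

definition ipS :: "('a \<Rightarrow> 'a \<Rightarrow> real) \<Rightarrow> 'a set \<Rightarrow> ('a \<Rightarrow> real) \<Rightarrow> ('a \<Rightarrow> real) \<Rightarrow> real" where
  "ipS mu B f g = (\<Sum>x\<in>B. mu_v mu x * f x * g x)"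

locale wg =
  fixes mu :: "'a \<Rightarrow> 'a \<Rightarrow> real"
  assumes wgr: "weighted_graph mu"
begin

lemma nonneg: "0 \<le> mu x y" using wgr unfolding weighted_graph_def by blast
lemma sym: "mu x y = mu y x" using wgr unfolding weighted_graph_def by blast
lemma locfin: "finite {y. 0 < mu x y}" using wgr unfolding weighted_graph_def by blast
lemma conn: "(x, y) \<in> {(a, b). 0 < mu a b}\<^sup>*" using wgr unfolding weighted_graph_def by blast
lemma two: "\<exists>x y::'a. x \<noteq> y" using wgr unfolding weighted_graph_def by blast

lemma zero_out: "\<not> 0 < mu x y \<Longrightarrow> mu x y = 0" using nonneg[of x y] by linarith

lemma has_nb: "\<exists>z. 0 < mu x z"
proof -
  obtain y where "y \<noteq> x" using two by metis
  from conn[of x y] this show ?thesis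
    by (metis (no_types, lifting) case_prodD converse_rtranclE mem_Collect_eq)
qed

lemma mu_v_pos: "0 < mu_v mu x"
proof -
  obtain z where z: "0 < mu x z" using has_nb by blast
  have "mu x z \<le> mu_v mu x" unfolding mu_v_def
    using z locfin[of x] by (intro member_le_sum) auto
  thus ?thesis using z by linarith
qed

lemma edge_exists: "\<exists>a b. a \<noteq> b \<and> 0 < mu a b"
proof -
  obtain x y :: 'a where xy: "x \<noteq> y" using two by blast
  have "(x, y) \<in> {(a, b). 0 < mu a b}\<^sup>* \<Longrightarrow> x \<noteq> y \<Longrightarrow> ?thesis"
  proof (induction rule: rtrancl_induct)
    case base then show ?case by simp
  next
    case (step y z)
    then show ?case by (cases "x = y") auto
  qed
  thus ?thesis using conn xy by blast
qed

lemma finite_nbr: "finite A \<Longrightarrow> finite (nbr mu A)"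
  unfolding nbr_def
proof -
  assume A: "finite A"
  have "{y. \<exists>x\<in>A. 0 < mu x y} = (\<Union>x\<in>A. {y. 0 < mu x y})" by auto
  thus "finite (A \<union> {y. \<exists>x\<in>A. 0 < mu x y})" using A locfin by auto
qed

lemma finite_ballr: "finite (ballr mu x k)"
  by (induction k) (auto intro: finite_nbr)

lemma sub_nbr: "A \<subseteq> nbr mu A" unfolding nbr_def by auto

lemma ballr_mono: "k \<le> j \<Longrightarrow> ballr mu x k \<subseteq> ballr mu x j"
proof (induction j)
  case 0 then show ?case by simp
next
  case (Suc j)
  then show ?case using sub_nbr by (cases "k = Suc j") force+
qed

lemma center_ballr: "x \<in> ballr mu x k"
  using ballr_mono[of 0 k x] by auto

lemma pop_sum:
  assumes "finite B" "{y. f y \<noteq> 0} \<subseteq> B"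
  shows "Pop mu f x * mu_v mu x = (\<Sum>y\<in>B. mu x y * f y)"
proof -
  have "Pop mu f x * mu_v mu x = (\<Sum>y\<in>{y. 0 < mu x y}. mu x y * f y)"
    unfolding Pop_def using mu_v_pos[of x] by simp
  also have "\<dots> = (\<Sum>y\<in>{y. 0 < mu x y} \<inter> B. mu x y * f y)"
    by (rule sum.mono_neutral_right) (use locfin assms in auto)
  also have "\<dots> = (\<Sum>y\<in>B. mu x y * f y)"
    by (rule sum.mono_neutral_left) (use assms zero_out in auto)
  finally show ?thesis .
qed

lemma row_sum:
  assumes "finite B" "x \<in> A" "nbr mu A \<subseteq> B"
  shows "(\<Sum>y\<in>B. mu x y) = mu_v mu x"
  unfolding mu_v_def
  by (rule sum.mono_neutral_left[symmetric]) (use assms zero_out in \<open>auto simp: nbr_def\<close>)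

lemma dsum_diag:
  assumes "finite B" "{x. F x \<noteq> 0} \<subseteq> A" "nbr mu A \<subseteq> B"
  shows "(\<Sum>x\<in>B. \<Sum>y\<in>B. mu x y * F x) = (\<Sum>x\<in>B. mu_v mu x * F x)"
proof (rule sum.cong[OF refl])
  fix x assume "x \<in> B"
  show "(\<Sum>y\<in>B. mu x y * F x) = mu_v mu x * F x"
  proof (cases "F x = 0")
    case True then show ?thesis by simp
  next
    case False
    then have "x \<in> A" using assms by auto
    then show ?thesis using row_sum[OF assms(1) _ assms(3)]
      by (simp add: sum_distrib_right[symmetric])
  qed
qed

lemma ip_pop:
  assumes "finite B" "{y. f y \<noteq> 0} \<subseteq> B"
  shows "ipS mu B (Pop mu f) g = (\<Sum>x\<in>B. \<Sum>y\<in>B. mu x y * f y * g x)"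
  unfolding ipS_def
proof (rule sum.cong[OF refl])
  fix x assume "x \<in> B"
  have "mu_v mu x * Pop mu f x * g x = (Pop mu f x * mu_v mu x) * g x" by simp
  also have "\<dots> = (\<Sum>y\<in>B. mu x y * f y) * g x" using pop_sum[OF assms] by simp
  finally show "mu_v mu x * Pop mu f x * g x = (\<Sum>y\<in>B. mu x y * f y * g x)"
    by (simp add: sum_distrib_right)
qed

lemma ip_selfadj:
  assumes "finite B" "{y. f y \<noteq> 0} \<subseteq> B" "{y. g y \<noteq> 0} \<subseteq> B"
  shows "ipS mu B (Pop mu f) g = ipS mu B f (Pop mu g)"
proof -
  have "ipS mu B f (Pop mu g) = ipS mu B (Pop mu g) f" unfolding ipS_def by (simp add: mult_ac)
  also have "\<dots> = (\<Sum>x\<in>B. \<Sum>y\<in>B. mu x y * g y * f x)" by (rule ip_pop[OF assms(1,3)])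
  also have "\<dots> = (\<Sum>y\<in>B. \<Sum>x\<in>B. mu x y * g y * f x)" by (rule sum.swap)
  also have "\<dots> = (\<Sum>y\<in>B. \<Sum>x\<in>B. mu y x * f x * g y)" by (simp add: sym mult_ac)
  also have "\<dots> = ipS mu B (Pop mu f) g" by (rule ip_pop[OF assms(1,2), symmetric])
  finally show ?thesis by simp
qed

lemma pop_supp:
  assumes "{y. f y \<noteq> 0} \<subseteq> A"
  shows "{y. Pop mu f y \<noteq> 0} \<subseteq> nbr mu A"
proof
  fix x assume "x \<in> {y. Pop mu f y \<noteq> 0}"
  then have "(\<Sum>y\<in>{y. 0 < mu x y}. mu x y * f y) \<noteq> 0" unfolding Pop_def by auto
  then obtain y where "0 < mu x y" "f y \<noteq> 0" by (metis (mono_tags, lifting) mult_zero_right sum.neutral mem_Collect_eq)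
  then show "x \<in> nbr mu A" using assms sym[of x y] unfolding nbr_def by auto
qed

lemma dsum_sq:
  assumes "finite B" "{x. f x \<noteq> 0} \<subseteq> A" "nbr mu A \<subseteq> B"
  shows "(\<Sum>x\<in>B. \<Sum>y\<in>B. mu x y * (f x + c * f y)^2)
           = (1 + c^2) * ipS mu B f f + 2 * c * ipS mu B (Pop mu f) f"
proof -
  have AB: "A \<subseteq> B" using assms(3) sub_nbr by blast
  have s2: "{x. f x \<noteq> 0} \<subseteq> B" using assms(2) AB by blast
  have e: "\<And>x y. mu x y * (f x + c * f y)^2 = mu x y * (f x)^2 + c^2 * (mu x y * (f y)^2) + 2 * c * (mu x y * f y * f x)"
    by (simp add: power2_eq_square algebra_simps)
  have t1: "(\<Sum>x\<in>B. \<Sum>y\<in>B. mu x y * (f x)^2) = ipS mu B f f"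
    using dsum_diag[of B "\<lambda>x. (f x)^2" A] assms unfolding ipS_def by (simp add: power2_eq_square mult_ac)
  have t2: "(\<Sum>x\<in>B. \<Sum>y\<in>B. mu x y * (f y)^2) = ipS mu B f f"
  proof -
    have "(\<Sum>x\<in>B. \<Sum>y\<in>B. mu x y * (f y)^2) = (\<Sum>y\<in>B. \<Sum>x\<in>B. mu x y * (f y)^2)" by (rule sum.swap)
    also have "\<dots> = (\<Sum>y\<in>B. \<Sum>x\<in>B. mu y x * (f y)^2)" by (simp add: sym)
    finally show ?thesis using t1 by simp
  qed
  have t3: "(\<Sum>x\<in>B. \<Sum>y\<in>B. mu x y * f y * f x) = ipS mu B (Pop mu f) f"
    using ip_pop[OF assms(1) s2] by simp
  have "(\<Sum>x\<in>B. \<Sum>y\<in>B. mu x y * (f x + c * f y)^2)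
     = (\<Sum>x\<in>B. \<Sum>y\<in>B. mu x y * (f x)^2) + c^2 * (\<Sum>x\<in>B. \<Sum>y\<in>B. mu x y * (f y)^2)
       + 2 * c * (\<Sum>x\<in>B. \<Sum>y\<in>B. mu x y * f y * f x)"
    by (simp add: e sum.distrib sum_distrib_left)
  also have "\<dots> = (1 + c^2) * ipS mu B f f + 2 * c * ipS mu B (Pop mu f) f"
    using t1 t2 t3 by (simp add: algebra_simps)
  finally show ?thesis .
qed

lemma ip_plus_nonneg:
  assumes "finite B" "{x. f x \<noteq> 0} \<subseteq> A" "nbr mu A \<subseteq> B"
  shows "0 \<le> ipS mu B f f + ipS mu B (Pop mu f) f"
proof -
  have "0 \<le> (\<Sum>x\<in>B. \<Sum>y\<in>B. mu x y * (f x + 1 * f y)^2)"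
    by (intro sum_nonneg mult_nonneg_nonneg nonneg) auto
  thus ?thesis using dsum_sq[OF assms, of 1] by simp
qed

definition Ereal :: "('a \<Rightarrow> real) \<Rightarrow> 'a set \<Rightarrow> real" where
  "Ereal f B = ipS mu B f f - ipS mu B (Pop mu f) f"

lemma Ereal_nonneg:
  assumes "finite B" "{x. f x \<noteq> 0} \<subseteq> A" "nbr mu A \<subseteq> B"
  shows "0 \<le> Ereal f B"
proof -
  have "0 \<le> (\<Sum>x\<in>B. \<Sum>y\<in>B. mu x y * (f x + (-1) * f y)^2)"
    by (intro sum_nonneg mult_nonneg_nonneg nonneg) auto
  thus ?thesis using dsum_sq[OF assms, of "-1"] unfolding Ereal_def by simp
qed

lemma energy_eq:
  assumes "finite B" "{x. f x \<noteq> 0} \<subseteq> A" "nbr mu A \<subseteq> B"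
  shows "energy mu f = ennreal (Ereal f B)"
proof -
  have AB: "A \<subseteq> B" using assms(3) sub_nbr by blast
  let ?g = "\<lambda>(x, y). ennreal (mu x y * (f x - f y)^2 / 2)"
  have "energy mu f = infsum ?g UNIV" unfolding energy_def by simp
  also have "\<dots> = infsum ?g (B \<times> B)"
  proof (rule infsum_cong_neutral)
    fix z assume "z \<in> UNIV - B \<times> B"
    then obtain x y where z: "z = (x, y)" "x \<notin> B \<or> y \<notin> B" by (cases z) auto
    show "?g z = 0"
    proof (cases "0 < mu x y")
      case False then show ?thesis using z zero_out by auto
    next
      case True
      have "f x = 0"
      proof (rule ccontr)
        assume "f x \<noteq> 0" then have "x \<in> A" using assms by auto
        then show False using z True AB assms(3) unfolding nbr_def by auto
      qed
      moreover have "f y = 0"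
      proof (rule ccontr)
        assume "f y \<noteq> 0" then have "y \<in> A" using assms by auto
        then show False using z True AB assms(3) sym[of x y] unfolding nbr_def by auto
      qed
      ultimately show ?thesis using z by simp
    qed
  qed auto
  also have "\<dots> = sum ?g (B \<times> B)" using assms(1) by simp
  also have "\<dots> = ennreal (\<Sum>(x,y)\<in>B \<times> B. mu x y * (f x - f y)^2 / 2)"
    by (subst sum_ennreal[symmetric]) (auto intro!: sum.cong simp: nonneg)
  also have "(\<Sum>(x,y)\<in>B \<times> B. mu x y * (f x - f y)^2 / 2)
       = (\<Sum>x\<in>B. \<Sum>y\<in>B. mu x y * (f x + (-1) * f y)^2) / 2"
    by (simp add: sum.cartesian_product[symmetric] sum_divide_distrib)
  also have "\<dots> = Ereal f B" using dsum_sq[OF assms, of "-1"] unfolding Ereal_def by simp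
  finally show ?thesis .
qed

lemma walk_nonneg: "0 \<le> walk_prob mu k x y"
proof (induction k arbitrary: x)
  case 0 then show ?case by simp
next
  case (Suc k)
  then show ?case
    by (simp add: trans_prob_def, intro sum_nonneg mult_nonneg_nonneg divide_nonneg_nonneg nonneg)
       (use mu_v_pos less_imp_le in auto)
qed

lemma walk_pop: "walk_prob mu (Suc k) x y = Pop mu (\<lambda>z. walk_prob mu k z y) x"
  unfolding Pop_def by (simp add: trans_prob_def sum_divide_distrib)

lemma walk_supp: "{x. walk_prob mu k x y \<noteq> 0} \<subseteq> ballr mu y k"
proof (induction k)
  case 0 then show ?case by auto
next
  case (Suc k)
  have "{x. walk_prob mu (Suc k) x y \<noteq> 0} = {x. Pop mu (\<lambda>z. walk_prob mu k z y) x \<noteq> 0}"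
    using walk_pop[of k _ y] by presburger
  also have "\<dots> \<subseteq> nbr mu (ballr mu y k)" by (rule pop_supp[OF Suc])
  finally show ?case by simp
qed

lemma ip_walk:
  assumes "finite B" "ballr mu y (a + b) \<subseteq> B" "ballr mu x (a + b) \<subseteq> B"
  shows "ipS mu B (\<lambda>z. walk_prob mu a z y) (\<lambda>z. walk_prob mu b z x)
       = ipS mu B (\<lambda>z. walk_prob mu 0 z y) (\<lambda>z. walk_prob mu (a + b) z x)"
  using assms
proof (induction a arbitrary: b)
  case 0 then show ?case by simp
next
  case (Suc a)
  have s1: "{z. walk_prob mu a z y \<noteq> 0} \<subseteq> B"
    using walk_supp[of a y] ballr_mono[of a "Suc a + b" y] Suc.prems by auto
  have s2: "{z. walk_prob mu b z x \<noteq> 0} \<subseteq> B"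
    using walk_supp[of b x] ballr_mono[of b "Suc a + b" x] Suc.prems by auto
  have "ipS mu B (\<lambda>z. walk_prob mu (Suc a) z y) (\<lambda>z. walk_prob mu b z x)
      = ipS mu B (Pop mu (\<lambda>z. walk_prob mu a z y)) (\<lambda>z. walk_prob mu b z x)"
    by (simp only: walk_pop)
  also have "\<dots> = ipS mu B (\<lambda>z. walk_prob mu a z y) (Pop mu (\<lambda>z. walk_prob mu b z x))"
    by (rule ip_selfadj[OF Suc.prems(1) s1 s2])
  also have "\<dots> = ipS mu B (\<lambda>z. walk_prob mu a z y) (\<lambda>z. walk_prob mu (Suc b) z x)"
    by (simp only: walk_pop)
  also have "\<dots> = ipS mu B (\<lambda>z. walk_prob mu 0 z y) (\<lambda>z. walk_prob mu (a + Suc b) z x)"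
    by (rule Suc.IH) (use Suc.prems in auto)
  finally show ?case by simp
qed

lemma ip_delta:
  assumes "finite B" "x \<in> B"
  shows "ipS mu B h (\<lambda>z. walk_prob mu 0 z x) = mu_v mu x * h x"
proof -
  have "ipS mu B h (\<lambda>z. walk_prob mu 0 z x) = (\<Sum>z\<in>B. if z = x then mu_v mu x * h x else 0)"
    unfolding ipS_def by (rule sum.cong) auto
  also have "\<dots> = mu_v mu x * h x" using assms by simp
  finally show ?thesis .
qed

lemma reversible: "mu_v mu x * walk_prob mu k x y = mu_v mu y * walk_prob mu k y x"
proof -
  define B where "B = ballr mu y k \<union> ballr mu x k"
  have fB: "finite B" unfolding B_def using finite_ballr by auto
  have xB: "x \<in> B" and yB: "y \<in> B" unfolding B_def using center_ballr by auto
  have "mu_v mu x * walk_prob mu k x y = ipS mu B (\<lambda>z. walk_prob mu k z y) (\<lambda>z. walk_prob mu 0 z x)"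
    using ip_delta[OF fB xB] by simp
  also have "\<dots> = ipS mu B (\<lambda>z. walk_prob mu 0 z y) (\<lambda>z. walk_prob mu k z x)"
    using ip_walk[OF fB, of y k 0 x] unfolding B_def by simp
  also have "\<dots> = ipS mu B (\<lambda>z. walk_prob mu k z x) (\<lambda>z. walk_prob mu 0 z y)"
    unfolding ipS_def by (simp add: mult_ac)
  also have "\<dots> = mu_v mu y * walk_prob mu k y x" using ip_delta[OF fB yB] by simp
  finally show ?thesis .
qed

definition gk :: "'a \<Rightarrow> nat \<Rightarrow> 'a \<Rightarrow> real" where
  "gk \<rho> k x = walk_prob mu k x \<rho> / mu_v mu \<rho>"

lemma hk_g: "heat_kernel mu k \<rho> x = gk \<rho> k x"
proof -
  have "mu_v mu x * walk_prob mu k x \<rho> = mu_v mu \<rho> * walk_prob mu k \<rho> x" by (rule reversible)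
  then show ?thesis unfolding heat_kernel_def gk_def using mu_v_pos[of x] mu_v_pos[of \<rho>]
    by (simp add: field_simps)
qed

lemma pop_g: "Pop mu (gk \<rho> k) = gk \<rho> (Suc k)"
proof
  fix x
  show "Pop mu (gk \<rho> k) x = gk \<rho> (Suc k) x"
    unfolding gk_def walk_pop unfolding Pop_def
    by (simp add: sum_divide_distrib mult_ac)
qed

lemma supp_g: "{x. gk \<rho> k x \<noteq> 0} \<subseteq> ballr mu \<rho> k"
  using walk_supp[of k \<rho>] unfolding gk_def by auto

lemma ip_g:
  assumes "finite B" "ballr mu \<rho> (a + b) \<subseteq> B"
  shows "ipS mu B (gk \<rho> a) (gk \<rho> b) = gk \<rho> (a + b) \<rho>"
proof -
  have rB: "\<rho> \<in> B" using assms center_ballr by blast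
  have "ipS mu B (gk \<rho> a) (gk \<rho> b)
      = ipS mu B (\<lambda>z. walk_prob mu a z \<rho>) (\<lambda>z. walk_prob mu b z \<rho>) / (mu_v mu \<rho>)^2"
    unfolding ipS_def gk_def by (simp add: sum_divide_distrib power2_eq_square)
  also have "ipS mu B (\<lambda>z. walk_prob mu a z \<rho>) (\<lambda>z. walk_prob mu b z \<rho>)
      = ipS mu B (\<lambda>z. walk_prob mu 0 z \<rho>) (\<lambda>z. walk_prob mu (a + b) z \<rho>)"
    by (rule ip_walk) (use assms in auto)
  also have "\<dots> = ipS mu B (\<lambda>z. walk_prob mu (a + b) z \<rho>) (\<lambda>z. walk_prob mu 0 z \<rho>)"
    unfolding ipS_def by (simp add: mult_ac)
  also have "\<dots> = mu_v mu \<rho> * walk_prob mu (a + b) \<rho> \<rho>" by (rule ip_delta[OF assms(1) rB])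
  finally show ?thesis unfolding gk_def using mu_v_pos[of \<rho>] by (simp add: power2_eq_square)
qed

lemma ip_comb:
  assumes "finite B" "ballr mu \<rho> N \<subseteq> B" "i + k \<le> N" "i + l \<le> N" "j + k \<le> N" "j + l \<le> N"
  shows "ipS mu B (\<lambda>x. c1 * gk \<rho> i x + c2 * gk \<rho> j x) (\<lambda>x. c3 * gk \<rho> k x + c4 * gk \<rho> l x)
    = c1 * c3 * gk \<rho> (i + k) \<rho> + c1 * c4 * gk \<rho> (i + l) \<rho> + c2 * c3 * gk \<rho> (j + k) \<rho>
      + c2 * c4 * gk \<rho> (j + l) \<rho>"
proof -
  have sub: "\<And>n. n \<le> N \<Longrightarrow> ballr mu \<rho> n \<subseteq> B" using assms(2) ballr_mono by blast
  have "ipS mu B (\<lambda>x. c1 * gk \<rho> i x + c2 * gk \<rho> j x) (\<lambda>x. c3 * gk \<rho> k x + c4 * gk \<rho> l x)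
    = c1 * c3 * ipS mu B (gk \<rho> i) (gk \<rho> k) + c1 * c4 * ipS mu B (gk \<rho> i) (gk \<rho> l)
      + c2 * c3 * ipS mu B (gk \<rho> j) (gk \<rho> k) + c2 * c4 * ipS mu B (gk \<rho> j) (gk \<rho> l)"
    unfolding ipS_def by (simp add: sum.distrib sum_distrib_left algebra_simps)
  then show ?thesis using ip_g[OF assms(1) sub] assms by simp
qed

lemma pop_comb: "Pop mu (\<lambda>x. c1 * gk \<rho> i x + c2 * gk \<rho> j x) = (\<lambda>x. c1 * gk \<rho> (Suc i) x + c2 * gk \<rho> (Suc j) x)"
proof -
  have "Pop mu (\<lambda>x. c1 * gk \<rho> i x + c2 * gk \<rho> j x) = (\<lambda>x. c1 * Pop mu (gk \<rho> i) x + c2 * Pop mu (gk \<rho> j) x)"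
    unfolding Pop_def by (rule ext) (simp add: sum.distrib sum_distrib_left algebra_simps add_divide_distrib)
  then show ?thesis by (simp add: pop_g)
qed

lemma supp_comb: "{x. c1 * gk \<rho> i x + c2 * gk \<rho> j x \<noteq> 0} \<subseteq> ballr mu \<rho> (max i j)"
proof -
  have "{x. c1 * gk \<rho> i x + c2 * gk \<rho> j x \<noteq> 0} \<subseteq> {x. gk \<rho> i x \<noteq> 0} \<union> {x. gk \<rho> j x \<noteq> 0}" by auto
  also have "\<dots> \<subseteq> ballr mu \<rho> (max i j)"
    using supp_g[of \<rho> i] supp_g[of \<rho> j] ballr_mono[of i "max i j" \<rho>] ballr_mono[of j "max i j" \<rho>] by auto
  finally show ?thesis .
qed

end

context wg begin
definition aa :: "'a \<Rightarrow> nat \<Rightarrow> real" where "aa \<rho> n = gk \<rho> n \<rho>"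
definition Dd :: "'a \<Rightarrow> nat \<Rightarrow> real" where
  "Dd \<rho> j = aa \<rho> (2*j) + aa \<rho> (2*j+1) - aa \<rho> (2*j+2) - aa \<rho> (2*j+3)"
definition TT :: "'a \<Rightarrow> nat \<Rightarrow> real" where "TT \<rho> j = aa \<rho> (2*j) + aa \<rho> (2*j+1)"
definition QQ :: "'a \<Rightarrow> nat \<Rightarrow> 'a \<Rightarrow> real" where
  "QQ \<rho> k = (\<lambda>x. (1/2) * gk \<rho> k x + (1/2) * gk \<rho> (Suc k) x)"

lemma aa_nonneg: "0 \<le> aa \<rho> n"
  unfolding aa_def gk_def using walk_nonneg mu_v_pos less_imp_le by (simp add: divide_nonneg_pos)

lemma TT_nonneg: "0 \<le> TT \<rho> n" unfolding TT_def using aa_nonneg by (simp add: add_nonneg_nonneg)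

lemma Dd_TT: "Dd \<rho> j = TT \<rho> j - TT \<rho> (Suc j)"
proof -
  have "2*Suc j = 2*j+2" "2*Suc j+1 = 2*j+3" by simp_all
  then show ?thesis unfolding Dd_def TT_def by (simp only:)
qed

lemma qker_QQ: "qker mu \<rho> m x = QQ \<rho> m x"
  unfolding qker_def QQ_def hk_g by simp

lemma energy_QQ: "energy mu (QQ \<rho> k) = ennreal (Dd \<rho> k / 4)" and Dd_nonneg: "0 \<le> Dd \<rho> k"
proof -
  define B where "B = ballr mu \<rho> (2*k+4)"
  have fB: "finite B" unfolding B_def by (rule finite_ballr)
  have sA: "{x. QQ \<rho> k x \<noteq> 0} \<subseteq> ballr mu \<rho> (Suc k)"
    using supp_comb[of "1/2" \<rho> k "1/2" "Suc k"] unfolding QQ_def by simp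
  have nA: "nbr mu (ballr mu \<rho> (Suc k)) \<subseteq> B"
    unfolding B_def using ballr_mono[of "Suc (Suc k)" "2*k+4" \<rho>] by simp
  have BB: "ballr mu \<rho> (2*k+3) \<subseteq> B" unfolding B_def by (rule ballr_mono) simp
  have e1': "ipS mu B (QQ \<rho> k) (QQ \<rho> k) = 1/2*(1/2) * gk \<rho> (k+k) \<rho> + 1/2*(1/2) * gk \<rho> (k+Suc k) \<rho>
     + 1/2*(1/2) * gk \<rho> (Suc k+k) \<rho> + 1/2*(1/2) * gk \<rho> (Suc k+Suc k) \<rho>"
    unfolding QQ_def by (rule ip_comb[OF fB BB]) simp_all
  have e2': "ipS mu B (Pop mu (QQ \<rho> k)) (QQ \<rho> k) = 1/2*(1/2) * gk \<rho> (Suc k+k) \<rho> + 1/2*(1/2) * gk \<rho> (Suc k+Suc k) \<rho>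
     + 1/2*(1/2) * gk \<rho> (Suc (Suc k)+k) \<rho> + 1/2*(1/2) * gk \<rho> (Suc (Suc k)+Suc k) \<rho>"
    unfolding QQ_def pop_comb by (rule ip_comb[OF fB BB]) simp_all
  have i1: "gk \<rho> (k+k) \<rho> = aa \<rho> (2*k)" "gk \<rho> (k+Suc k) \<rho> = aa \<rho> (2*k+1)"
    "gk \<rho> (Suc k+k) \<rho> = aa \<rho> (2*k+1)" "gk \<rho> (Suc k+Suc k) \<rho> = aa \<rho> (2*k+2)"
    "gk \<rho> (Suc (Suc k)+k) \<rho> = aa \<rho> (2*k+2)" "gk \<rho> (Suc (Suc k)+Suc k) \<rho> = aa \<rho> (2*k+3)"
    unfolding aa_def by (rule arg_cong[where f="\<lambda>n. gk \<rho> n \<rho>"], arith)+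
  have e1: "ipS mu B (QQ \<rho> k) (QQ \<rho> k) = (aa \<rho> (2*k) + 2 * aa \<rho> (2*k+1) + aa \<rho> (2*k+2)) / 4"
    using e1' unfolding i1 by (simp add: field_simps)
  have e2: "ipS mu B (Pop mu (QQ \<rho> k)) (QQ \<rho> k) = (aa \<rho> (2*k+1) + 2 * aa \<rho> (2*k+2) + aa \<rho> (2*k+3)) / 4"
    using e2' unfolding i1 by (simp add: field_simps)
  have E: "Ereal (QQ \<rho> k) B = Dd \<rho> k / 4" unfolding Ereal_def e1 e2 Dd_def by (simp add: field_simps)
  show "energy mu (QQ \<rho> k) = ennreal (Dd \<rho> k / 4)" using energy_eq[OF fB sA nA] E by simp
  show "0 \<le> Dd \<rho> k" using Ereal_nonneg[OF fB sA nA] E by simp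
qed

lemma Dd_mono: "Dd \<rho> (Suc j) \<le> Dd \<rho> j"
proof -
  define B where "B = ballr mu \<rho> (2*j+6)"
  define v where "v = (\<lambda>x. 1 * gk \<rho> j x + (-1) * gk \<rho> (j+2) x)"
  have fB: "finite B" unfolding B_def by (rule finite_ballr)
  have sA: "{x. v x \<noteq> 0} \<subseteq> ballr mu \<rho> (j+2)"
    using supp_comb[of 1 \<rho> j "-1" "j+2"] unfolding v_def by simp
  have nA: "nbr mu (ballr mu \<rho> (j+2)) \<subseteq> B"
    unfolding B_def using ballr_mono[of "Suc (j+2)" "2*j+6" \<rho>] by simp
  have BB: "ballr mu \<rho> (2*j+5) \<subseteq> B" unfolding B_def by (rule ballr_mono) simp
  have e1': "ipS mu B v v = 1*1 * gk \<rho> (j+j) \<rho> + 1*(-1) * gk \<rho> (j+(j+2)) \<rho>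
     + (-1)*1 * gk \<rho> ((j+2)+j) \<rho> + (-1)*(-1) * gk \<rho> ((j+2)+(j+2)) \<rho>"
    unfolding v_def by (rule ip_comb[OF fB BB]) simp_all
  have e2': "ipS mu B (Pop mu v) v = 1*1 * gk \<rho> (Suc j+j) \<rho> + 1*(-1) * gk \<rho> (Suc j+(j+2)) \<rho>
     + (-1)*1 * gk \<rho> (Suc (j+2)+j) \<rho> + (-1)*(-1) * gk \<rho> (Suc (j+2)+(j+2)) \<rho>"
    unfolding v_def pop_comb by (rule ip_comb[OF fB BB]) simp_all
  have i1: "gk \<rho> (j+j) \<rho> = aa \<rho> (2*j)" "gk \<rho> (j+(j+2)) \<rho> = aa \<rho> (2*j+2)"
    "gk \<rho> ((j+2)+j) \<rho> = aa \<rho> (2*j+2)" "gk \<rho> ((j+2)+(j+2)) \<rho> = aa \<rho> (2*j+4)"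
    "gk \<rho> (Suc j+j) \<rho> = aa \<rho> (2*j+1)" "gk \<rho> (Suc j+(j+2)) \<rho> = aa \<rho> (2*j+3)"
    "gk \<rho> (Suc (j+2)+j) \<rho> = aa \<rho> (2*j+3)" "gk \<rho> (Suc (j+2)+(j+2)) \<rho> = aa \<rho> (2*j+5)"
    unfolding aa_def by (rule arg_cong[where f="\<lambda>n. gk \<rho> n \<rho>"], arith)+
  have e1: "ipS mu B v v = aa \<rho> (2*j) - 2 * aa \<rho> (2*j+2) + aa \<rho> (2*j+4)"
    using e1' unfolding i1 by linarith
  have e2: "ipS mu B (Pop mu v) v = aa \<rho> (2*j+1) - 2 * aa \<rho> (2*j+3) + aa \<rho> (2*j+5)"
    using e2' unfolding i1 by linarith
  have "0 \<le> ipS mu B v v + ipS mu B (Pop mu v) v" by (rule ip_plus_nonneg[OF fB sA nA])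
  moreover have "2*Suc j = 2*j+2" "2*Suc j+1 = 2*j+3" "2*Suc j+2 = 2*j+4" "2*Suc j+3 = 2*j+5" by simp_all
  ultimately show ?thesis unfolding e1 e2 Dd_def by (simp only:)
qed

lemma tele: "i \<le> j \<Longrightarrow> real (j - i + 1) * Dd \<rho> j \<le> TT \<rho> i - TT \<rho> (Suc j)"
proof (induction j rule: dec_induct)
  case base then show ?case by (simp add: Dd_TT)
next
  case (step j)
  have h1: "real (Suc j - i + 1) = real (j - i + 1) + 1" using step.hyps by (simp add: Suc_diff_le)
  have h2: "real (j - i + 1) * Dd \<rho> (Suc j) \<le> real (j - i + 1) * Dd \<rho> j"
    by (rule mult_left_mono[OF Dd_mono]) simp
  have h4: "Dd \<rho> (Suc j) = TT \<rho> (Suc j) - TT \<rho> (Suc (Suc j))" by (rule Dd_TT)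
  have h5: "real (Suc j - i + 1) * Dd \<rho> (Suc j) = real (j - i + 1) * Dd \<rho> (Suc j) + Dd \<rho> (Suc j)"
    by (simp only: h1 distrib_right mult_1)
  show ?case using h2 h4 h5 step.IH by linarith
qed

lemma Dd_bound: "i \<le> j \<Longrightarrow> real (j - i + 1) * Dd \<rho> j \<le> TT \<rho> i"
  using tele[of i j \<rho>] TT_nonneg[of \<rho> "Suc j"] by linarith

end

context wg begin

lemma single_term: "ennreal (mu a b * (f a - f b)^2 / 2) \<le> energy mu f"
proof -
  let ?g = "\<lambda>(x, y). ennreal (mu x y * (f x - f y)^2 / 2)"
  have "ennreal (mu a b * (f a - f b)^2 / 2) = infsum ?g {(a, b)}" by simp
  also have "\<dots> \<le> infsum ?g UNIV"
    by (rule infsum_mono_neutral) (auto intro: nonneg_summable_on_complete)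
  finally show ?thesis unfolding energy_def .
qed

lemma single_term_real:
  assumes "energy mu f < \<infinity>"
  shows "mu a b * (f a - f b)^2 / 2 \<le> enn2real (energy mu f)"
proof -
  have "enn2real (ennreal (mu a b * (f a - f b)^2 / 2)) \<le> enn2real (energy mu f)"
    using enn2real_mono[OF single_term[of a b f]] assms by simp
  moreover have "0 \<le> mu a b * (f a - f b)^2 / 2" using nonneg by simp
  ultimately show ?thesis by simp
qed

lemma path_bound: "\<exists>C\<ge>0. \<forall>f. energy mu f < \<infinity> \<longrightarrow> (f x - f y)^2 \<le> C * enn2real (energy mu f)"
proof -
  have "(x, y) \<in> {(a, b). 0 < mu a b}\<^sup>* \<Longrightarrow> ?thesis"
  proof (induction rule: rtrancl_induct)
    case base then show ?case by (intro exI[of _ 0]) simp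
  next
    case (step z w)
    then obtain C where C: "C \<ge> 0" "\<forall>f. energy mu f < \<infinity> \<longrightarrow> (f x - f z)^2 \<le> C * enn2real (energy mu f)"
      by blast
    have m: "0 < mu z w" using step by auto
    show ?case
    proof (intro exI[of _ "2 * C + 4 / mu z w"] conjI allI impI)
      show "0 \<le> 2 * C + 4 / mu z w" using C m by simp
      fix f assume fin: "energy mu f < \<infinity>"
      let ?E = "enn2real (energy mu f)"
      have a: "(f x - f z)^2 \<le> C * ?E" using C fin by blast
      have "mu z w * (f z - f w)^2 / 2 \<le> ?E" by (rule single_term_real[OF fin])
      then have b: "(f z - f w)^2 \<le> 2 * ?E / mu z w" using m by (simp add: field_simps)
      have "(f x - f w)^2 \<le> 2 * (f x - f z)^2 + 2 * (f z - f w)^2"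
      proof -
        have "(f x - f w)^2 = 2*(f x - f z)^2 + 2*(f z - f w)^2 - (f x - 2*f z + f w)^2"
          by (simp add: power2_eq_square algebra_simps)
        moreover have "0 \<le> (f x - 2*f z + f w)^2" by simp
        ultimately show ?thesis by linarith
      qed
      also have "\<dots> \<le> 2 * (C * ?E) + 2 * (2 * ?E / mu z w)" using a b by linarith
      also have "\<dots> = (2 * C + 4 / mu z w) * ?E" by (simp add: algebra_simps)
      finally show "(f x - f w)^2 \<le> (2 * C + 4 / mu z w) * ?E" .
    qed
  qed
  thus ?thesis using conn by blast
qed

definition rset :: "'a \<Rightarrow> 'a \<Rightarrow> real set" where
  "rset x y = {\<bar>f x - f y\<bar>^2 / enn2real (energy mu f) | f. 0 < energy mu f \<and> energy mu f < \<infinity>}"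

lemma rset_ne: "rset x y \<noteq> {}"
proof -
  obtain a b where ab: "a \<noteq> b" "0 < mu a b" using edge_exists by blast
  define f where "f = (\<lambda>z. if z = a then 1 else (0::real))"
  have sA: "{z. f z \<noteq> 0} \<subseteq> {a}" unfolding f_def by auto
  have fB: "finite (nbr mu {a})" by (rule finite_nbr) simp
  have "energy mu f = ennreal (Ereal f (nbr mu {a}))" by (rule energy_eq[OF fB sA]) simp
  then have fin: "energy mu f < \<infinity>" by simp
  have "ennreal (mu a b * (f a - f b)^2 / 2) \<le> energy mu f" by (rule single_term)
  moreover have "0 < ennreal (mu a b * (f a - f b)^2 / 2)" using ab unfolding f_def by simp
  ultimately have "0 < energy mu f" by order
  then show ?thesis using fin unfolding rset_def by blast
qed

lemma rset_bdd: "bdd_above (rset x y)"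
proof -
  obtain C where C: "C \<ge> 0" "\<forall>f. energy mu f < \<infinity> \<longrightarrow> (f x - f y)^2 \<le> C * enn2real (energy mu f)"
    using path_bound by blast
  show ?thesis unfolding bdd_above_def
  proof (intro exI[of _ C] ballI)
    fix t assume "t \<in> rset x y"
    then obtain f where t: "t = \<bar>f x - f y\<bar>^2 / enn2real (energy mu f)" and
      e: "0 < energy mu f" "energy mu f < \<infinity>" unfolding rset_def by blast
    have pos: "0 < enn2real (energy mu f)" using e by (simp add: enn2real_positive_iff)
    have "(f x - f y)^2 \<le> C * enn2real (energy mu f)" using C e by auto
    then show "t \<le> C" unfolding t using pos by (simp add: divide_le_eq)
  qed
qed

lemma res_rset: "resistance mu x y = Sup (rset x y)"
  unfolding resistance_def rset_def by simp

lemma res_nonneg: "0 \<le> resistance mu x y"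
proof -
  obtain t where t: "t \<in> rset x y" using rset_ne by blast
  have "0 \<le> t" using t unfolding rset_def by auto
  also have "t \<le> Sup (rset x y)" by (rule cSup_upper[OF t rset_bdd])
  finally show ?thesis by (simp add: res_rset)
qed

lemma res_self: "resistance mu x x = 0"
proof -
  have "rset x x \<subseteq> {0}" unfolding rset_def by auto
  then have "rset x x = {0}" using rset_ne[of x x] by blast
  then show ?thesis by (simp add: res_rset)
qed

lemma res_le:
  assumes "energy mu f < \<infinity>"
  shows "(f x - f y)^2 \<le> resistance mu x y * enn2real (energy mu f)"
proof (cases "energy mu f = 0")
  case True
  obtain C where C: "\<forall>f. energy mu f < \<infinity> \<longrightarrow> (f x - f y)^2 \<le> C * enn2real (energy mu f)"
    using path_bound by blast
  have "(f x - f y)^2 \<le> 0" using C assms True by fastforce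
  then show ?thesis using True by simp
next
  case False
  then have e: "0 < energy mu f" "energy mu f < \<infinity>" using assms by (auto simp: zero_less_iff_neq_zero)
  have pos: "0 < enn2real (energy mu f)" using e by (simp add: enn2real_positive_iff)
  have "\<bar>f x - f y\<bar>^2 / enn2real (energy mu f) \<in> rset x y" unfolding rset_def using e by blast
  then have "\<bar>f x - f y\<bar>^2 / enn2real (energy mu f) \<le> resistance mu x y"
    unfolding res_rset by (rule cSup_upper[OF _ rset_bdd])
  then show ?thesis using pos by (simp add: divide_le_eq)
qed

end


lemma quad_bound:
  fixes b c :: real
  assumes "0 \<le> b" "0 \<le> c" "b \<le> 2 * c + sqrt (c * b)"
  shows "b \<le> 4 * c"
proof (rule ccontr)
  assume "\<not> b \<le> 4 * c"
  then have bc: "4 * c < b" by simp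
  define s where "s = sqrt b"
  define u where "u = sqrt c"
  have s2: "s^2 = b" unfolding s_def using assms by simp
  have u2: "u^2 = c" unfolding u_def using assms by simp
  have su: "sqrt (c * b) = u * s" unfolding s_def u_def using assms by (simp add: real_sqrt_mult)
  have "0 \<le> s" "0 \<le> u" unfolding s_def u_def using assms by simp_all
  have "2 * u < s"
  proof -
    have "sqrt (4 * c) < sqrt b" using bc by (rule real_sqrt_less_mono)
    moreover have "sqrt (4 * c) = 2 * u" unfolding u_def by (simp add: real_sqrt_mult)
    ultimately show ?thesis unfolding s_def by simp
  qed
  have "s^2 \<le> 2 * u^2 + u * s" using assms(3) s2 u2 su by simp
  moreover have "2 * u^2 + u * s < s^2"
  proof -
    have "2 * u * s \<le> s * s" using \<open>2 * u < s\<close> \<open>0 \<le> s\<close> by (intro mult_right_mono) auto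
    then have "u * s \<le> s * s / 2" by simp
    moreover have "(2 * u)^2 < s^2" using \<open>2 * u < s\<close> \<open>0 \<le> u\<close>
      by (intro power_strict_mono) auto
    then have "2 * u^2 < s * s / 2" by (simp add: power2_eq_square)
    ultimately show ?thesis by (simp add: power2_eq_square)
  qed
  ultimately show False by simp
qed

lemma eps_arg:
  fixes X c H :: real
  assumes "0 \<le> c" "\<And>r. H < r \<Longrightarrow> X \<le> c * r"
  shows "X \<le> c * H"
proof (rule ccontr)
  assume neg: "\<not> X \<le> c * H"
  show False
  proof (cases "c = 0")
    case True then show False using assms(2)[of "H + 1"] neg by simp
  next
    case False
    then have cp: "0 < c" using assms(1) by simp
    define r where "r = (H + X / c) / 2"
    have "H < X / c" using neg cp by (simp add: field_simps)
    then have "H < r" unfolding r_def by simp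
    then have "X \<le> c * r" by (rule assms(2))
    also have "c * r = (c * H + X) / 2" unfolding r_def using cp by (simp add: field_simps)
    finally show False using neg by simp
  qed
qed

context wg begin

lemma gk_nonneg: "0 \<le> gk \<rho> k x"
  unfolding gk_def using walk_nonneg mu_v_pos less_imp_le by (simp add: divide_nonneg_pos)

lemma QQ_nonneg: "0 \<le> QQ \<rho> k x"
  unfolding QQ_def using gk_nonneg by (simp add: add_nonneg_nonneg)

lemma supp_QQ: "{x. QQ \<rho> k x \<noteq> 0} \<subseteq> ballr mu \<rho> (Suc k)"
  using supp_comb[of "1/2" \<rho> k "1/2" "Suc k"] unfolding QQ_def by simp

lemma mass_g:
  assumes "finite B" "ballr mu \<rho> (Suc k) \<subseteq> B"
  shows "(\<Sum>x\<in>B. mu_v mu x * gk \<rho> k x) = 1"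
  using assms
proof (induction k)
  case 0
  have rB: "\<rho> \<in> B" using 0 center_ballr by blast
  have "(\<Sum>x\<in>B. mu_v mu x * gk \<rho> 0 x) = (\<Sum>x\<in>B. if x = \<rho> then 1 else 0)"
    unfolding gk_def using mu_v_pos[of \<rho>] by (intro sum.cong) auto
  also have "\<dots> = 1" using rB 0 by simp
  finally show ?case .
next
  case (Suc k)
  have sk: "{x. gk \<rho> k x \<noteq> 0} \<subseteq> ballr mu \<rho> k" by (rule supp_g)
  have nb: "nbr mu (ballr mu \<rho> k) \<subseteq> B" using Suc.prems ballr_mono[of "Suc k" "Suc (Suc k)" \<rho>] by simp
  have sB: "{x. gk \<rho> k x \<noteq> 0} \<subseteq> B" using sk nb sub_nbr by blast
  have "(\<Sum>x\<in>B. mu_v mu x * gk \<rho> (Suc k) x) = (\<Sum>x\<in>B. Pop mu (gk \<rho> k) x * mu_v mu x)"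
    by (simp add: pop_g mult_ac)
  also have "\<dots> = (\<Sum>x\<in>B. \<Sum>y\<in>B. mu x y * gk \<rho> k y)"
    using pop_sum[OF Suc.prems(1) sB] by simp
  also have "\<dots> = (\<Sum>y\<in>B. \<Sum>x\<in>B. mu x y * gk \<rho> k y)" by (rule sum.swap)
  also have "\<dots> = (\<Sum>y\<in>B. \<Sum>x\<in>B. mu y x * gk \<rho> k y)" by (simp add: sym)
  also have "\<dots> = (\<Sum>y\<in>B. mu_v mu y * gk \<rho> k y)" by (rule dsum_diag[OF Suc.prems(1) sk nb])
  also have "\<dots> = 1" using Suc.IH Suc.prems ballr_mono[of "Suc k" "Suc (Suc k)" \<rho>] by simp
  finally show ?case .
qed

lemma mass_QQ:
  assumes "finite B" "ballr mu \<rho> (Suc (Suc k)) \<subseteq> B"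
  shows "(\<Sum>x\<in>B. mu_v mu x * QQ \<rho> k x) = 1"
proof -
  have a: "(\<Sum>x\<in>B. mu_v mu x * gk \<rho> k x) = 1"
    using mass_g[OF assms(1)] assms(2) ballr_mono[of "Suc k" "Suc (Suc k)" \<rho>] by simp
  have b: "(\<Sum>x\<in>B. mu_v mu x * gk \<rho> (Suc k) x) = 1" using mass_g[OF assms] .
  have "(\<Sum>x\<in>B. mu_v mu x * QQ \<rho> k x)
      = (\<Sum>x\<in>B. mu_v mu x * gk \<rho> k x) / 2 + (\<Sum>x\<in>B. mu_v mu x * gk \<rho> (Suc k) x) / 2"
  proof -
    have "(\<Sum>x\<in>B. mu_v mu x * QQ \<rho> k x) = (\<Sum>x\<in>B. mu_v mu x * gk \<rho> k x / 2 + mu_v mu x * gk \<rho> (Suc k) x / 2)"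
      unfolding QQ_def by (simp add: algebra_simps)
    also have "\<dots> = (\<Sum>x\<in>B. mu_v mu x * gk \<rho> k x / 2) + (\<Sum>x\<in>B. mu_v mu x * gk \<rho> (Suc k) x / 2)"
      by (rule sum.distrib)
    finally show ?thesis by (simp add: sum_divide_distrib)
  qed
  then show ?thesis using a b by simp
qed

definition hset :: "'a \<Rightarrow> real \<Rightarrow> real set" where
  "hset \<rho> K = {r. hfun mu \<rho> r \<le> ennreal K}"

lemma hset_0: "0 \<in> hset \<rho> K"
  unfolding hset_def hfun_def by simp

lemma hset_bdd:
  assumes "0 \<le> K"
  shows "bdd_above (hset \<rho> K)"
  unfolding bdd_above_def
proof (intro exI[of _ "K / mu_v mu \<rho>"] ballI)
  fix r assume r: "r \<in> hset \<rho> K"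
  show "r \<le> K / mu_v mu \<rho>"
  proof (cases "r \<le> 0")
    case True
    have "0 \<le> K / mu_v mu \<rho>" using assms mu_v_pos[of \<rho>] by simp
    then show ?thesis using True by linarith
  next
    case False
    have inb: "\<rho> \<in> {x. resistance mu \<rho> x \<le> r}" using False res_self by simp
    have "ennreal (mu_v mu \<rho>) = nu mu {\<rho>}" unfolding nu_def by simp
    also have "\<dots> \<le> vol_ball mu \<rho> r" unfolding vol_ball_def nu_def
    proof (rule infsum_mono_neutral)
      show "(\<lambda>x. ennreal (mu_v mu x)) summable_on {\<rho>}" by (rule nonneg_summable_on_complete) simp
      show "(\<lambda>x. ennreal (mu_v mu x)) summable_on {x. resistance mu \<rho> x \<le> r}"
        by (rule nonneg_summable_on_complete) simp
    qed (use inb in auto)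
    finally have "ennreal r * ennreal (mu_v mu \<rho>) \<le> hfun mu \<rho> r"
      unfolding hfun_def by (rule mult_left_mono) simp
    also have "\<dots> \<le> ennreal K" using r unfolding hset_def by simp
    moreover have "ennreal (r * mu_v mu \<rho>) = ennreal r * ennreal (mu_v mu \<rho>)"
      using False mu_v_pos[of \<rho>] by (intro ennreal_mult) auto
    ultimately have "ennreal (r * mu_v mu \<rho>) \<le> ennreal K" by simp
    then have "r * mu_v mu \<rho> \<le> K" using assms by simp
    then show ?thesis using mu_v_pos[of \<rho>] by (simp add: field_simps)
  qed
qed

lemma hinv_nonneg: "0 \<le> K \<Longrightarrow> 0 \<le> hinv mu \<rho> K"
proof -
  assume K: "0 \<le> K"
  have "0 \<le> Sup (hset \<rho> K)" by (rule cSup_upper[OF hset_0 hset_bdd[OF K]])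
  then show ?thesis unfolding hinv_def hset_def .
qed

lemma above_hinv:
  assumes "0 \<le> K" "hinv mu \<rho> K < r"
  shows "ennreal K < hfun mu \<rho> r"
proof (rule ccontr)
  assume "\<not> ennreal K < hfun mu \<rho> r"
  then have "r \<in> hset \<rho> K" unfolding hset_def by (simp add: not_less)
  then have "r \<le> Sup (hset \<rho> K)" by (rule cSup_upper[OF _ hset_bdd[OF assms(1)]])
  then have "r \<le> hinv mu \<rho> K" unfolding hinv_def hset_def .
  then show False using assms by simp
qed

end

context wg begin

lemma QQ_at: "QQ \<rho> (2*n) \<rho> = TT \<rho> n / 2"
  unfolding QQ_def TT_def aa_def by simp

lemma ondiag:
  assumes K: "0 < K" and r: "hinv mu \<rho> K < r"
  shows "TT \<rho> n / 2 \<le> r / K + sqrt (r * (Dd \<rho> (2*n) / 4))"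
proof -
  define f where "f = QQ \<rho> (2*n)"
  define E2 where "E2 = Dd \<rho> (2*n) / 4"
  define b where "b = TT \<rho> n / 2"
  have H0: "0 \<le> hinv mu \<rho> K" using hinv_nonneg K by simp
  have rpos: "0 < r" using H0 r by linarith
  have E2nn: "0 \<le> E2" unfolding E2_def using Dd_nonneg by simp
  have en: "energy mu f = ennreal E2" unfolding f_def E2_def by (rule energy_QQ)
  have enfin: "energy mu f < \<infinity>" using en by simp
  have enr: "enn2real (energy mu f) = E2" using en E2nn by simp
  have fr: "f \<rho> = b" unfolding f_def b_def by (rule QQ_at)
  define t where "t = b - sqrt (r * E2)"
  have "0 < r / K" using rpos K by simp
  show ?thesis
  proof (cases "t \<le> 0")
    case True
    then show ?thesis using \<open>0 < r / K\<close> unfolding t_def b_def E2_def by linarith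
  next
    case False
    then have tpos: "0 < t" by simp
    define Ball where "Ball = {x. resistance mu \<rho> x \<le> r}"
    define B where "B = ballr mu \<rho> (Suc (Suc (2*n)))"
    have fB: "finite B" unfolding B_def by (rule finite_ballr)
    have ge: "t \<le> f y" if y: "y \<in> Ball" for y
    proof -
      have "(f \<rho> - f y)^2 \<le> resistance mu \<rho> y * E2" using res_le[OF enfin] enr by metis
      also have "\<dots> \<le> r * E2" using y E2nn unfolding Ball_def by (intro mult_right_mono) auto
      finally have "sqrt ((f \<rho> - f y)^2) \<le> sqrt (r * E2)" by (rule real_sqrt_le_mono)
      then have "\<bar>f \<rho> - f y\<bar> \<le> sqrt (r * E2)" by simp
      then show ?thesis unfolding t_def using fr by linarith
    qed
    have BallB: "Ball \<subseteq> B"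
    proof
      fix y assume y: "y \<in> Ball"
      then have "f y \<noteq> 0" using ge[OF y] tpos by simp
      then have "y \<in> ballr mu \<rho> (Suc (2*n))" using supp_QQ[of \<rho> "2*n"] unfolding f_def by blast
      then show "y \<in> B" unfolding B_def using ballr_mono[of "Suc (2*n)" "Suc (Suc (2*n))" \<rho>] by auto
    qed
    have fBall: "finite Ball" using finite_subset[OF BallB fB] .
    define V where "V = (\<Sum>y\<in>Ball. mu_v mu y)"
    have Vnn: "0 \<le> V" unfolding V_def by (rule sum_nonneg) (use mu_v_pos less_imp_le in blast)
    have "vol_ball mu \<rho> r = ennreal V"
      unfolding vol_ball_def nu_def V_def Ball_def[symmetric] using fBall
      by (simp add: sum_ennreal mu_v_pos less_imp_le)
    then have "hfun mu \<rho> r = ennreal (r * V)" unfolding hfun_def using rpos Vnn by (simp add: ennreal_mult)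
    then have "ennreal K < ennreal (r * V)" using above_hinv[OF _ r] K by simp
    then have KV: "K < r * V" using K by (simp add: ennreal_less_iff)
    have "t * V = (\<Sum>y\<in>Ball. mu_v mu y * t)" unfolding V_def by (simp add: sum_distrib_left mult_ac)
    also have "\<dots> \<le> (\<Sum>y\<in>Ball. mu_v mu y * f y)"
      using ge mu_v_pos less_imp_le by (intro sum_mono mult_left_mono) auto
    also have "\<dots> \<le> (\<Sum>y\<in>B. mu_v mu y * f y)"
      using BallB fB mu_v_pos less_imp_le QQ_nonneg unfolding f_def
      by (intro sum_mono2) (auto intro!: mult_nonneg_nonneg less_imp_le[OF mu_v_pos])
    also have "\<dots> = 1" unfolding f_def B_def by (rule mass_QQ[OF finite_ballr]) simp
    finally have tV: "t * V \<le> 1" .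
    have "t * K < t * (r * V)" using KV tpos by simp
    also have "\<dots> = r * (t * V)" by simp
    also have "\<dots> \<le> r" using tV rpos by simp
    finally have "t * K < r" .
    then have "t < r / K" using K by (simp add: field_simps)
    then show ?thesis unfolding t_def b_def E2_def by linarith
  qed
qed

end

context wg begin

lemma main:
  assumes m1: "1 \<le> m"
  shows "(QQ \<rho> m x - QQ \<rho> m y)^2
           \<le> 12 * resistance mu x y * hinv mu \<rho> (of_int \<lceil>real m / 2\<rceil>) / (real m)^2"
proof -
  define K :: real where "K = of_int \<lceil>real m / 2\<rceil>"
  define n where "n = m div 2"
  define R where "R = resistance mu x y"
  define H where "H = hinv mu \<rho> K"
  define X where "X = (QQ \<rho> m x - QQ \<rho> m y)^2"
  define b where "b = TT \<rho> n / 2"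
  define E1 where "E1 = Dd \<rho> m / 4"
  define E2 where "E2 = Dd \<rho> (2*n) / 4"
  have mpos: "0 < real m" using m1 by simp
  have Km: "real m / 2 \<le> K" unfolding K_def by (rule le_of_int_ceiling)
  have Kpos: "0 < K" using Km mpos by linarith
  have Rnn: "0 \<le> R" unfolding R_def by (rule res_nonneg)
  have n2: "2 * n \<le> m" "m \<le> 2 * n + 1" unfolding n_def by auto
  have n2r: "real m \<le> 2 * real n + 1" using n2(2) by linarith
  have n2r': "2 * real n \<le> real m" using n2(1) by linarith
  have bnn: "0 \<le> b" unfolding b_def using TT_nonneg by simp
  have E1nn: "0 \<le> E1" unfolding E1_def using Dd_nonneg by simp
  have en1: "energy mu (QQ \<rho> m) = ennreal E1" unfolding E1_def by (rule energy_QQ)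
  have X1: "X \<le> R * E1"
  proof -
    have "energy mu (QQ \<rho> m) < \<infinity>" using en1 by simp
    from res_le[OF this, of x y] show ?thesis unfolding X_def R_def using en1 E1nn by simp
  qed
  have db1: "real (m - n + 1) * Dd \<rho> m \<le> TT \<rho> n" by (rule Dd_bound) (use n2 in simp)
  have db2: "real (2*n - n + 1) * Dd \<rho> (2*n) \<le> TT \<rho> n" by (rule Dd_bound) simp
  have mn: "real (m - n + 1) = real m - real n + 1" using n2 by (simp add: of_nat_diff)
  have nn: "real (2*n - n + 1) = real n + 1" by simp
  have E1b: "E1 \<le> b / real m"
  proof -
    have q: "real m \<le> 2 * (real m - real n + 1)" using n2r' by (simp add: algebra_simps)
    have p1: "(real m - real n + 1) * Dd \<rho> m \<le> TT \<rho> n" using db1 mn by (simp add: add.commute)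
    have p2: "4 * (real m - real n + 1) * E1 = (real m - real n + 1) * Dd \<rho> m" unfolding E1_def by simp
    have p3: "(2 * real m) * E1 \<le> (4 * (real m - real n + 1)) * E1"
      by (rule mult_right_mono) (use q E1nn in auto)
    have "2 * real m * E1 \<le> 2 * b" using p1 p2 p3 unfolding b_def by linarith
    then have "real m * E1 \<le> b" by simp
    then show ?thesis using mpos by (simp add: field_simps)
  qed
  have E2nn: "0 \<le> E2" unfolding E2_def using Dd_nonneg by simp
  have E2b: "E2 \<le> b / real m"
  proof -
    have p1: "(real n + 1) * Dd \<rho> (2*n) \<le> TT \<rho> n" using db2 nn by (simp add: add.commute)
    have p2: "4 * (real n + 1) * E2 = (real n + 1) * Dd \<rho> (2*n)" unfolding E2_def by simp
    have p3: "(2 * real m) * E2 \<le> (4 * (real n + 1)) * E2"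
      by (rule mult_right_mono) (use n2r E2nn in auto)
    have "2 * real m * E2 \<le> 2 * b" using p1 p2 p3 unfolding b_def by linarith
    then have "real m * E2 \<le> b" by simp
    then show ?thesis using mpos by (simp add: field_simps)
  qed
  have key: "X \<le> (12 * R / (real m)^2) * r" if r: "H < r" for r
  proof -
    have H0: "0 \<le> H" unfolding H_def using hinv_nonneg Kpos by simp
    have rpos: "0 < r" using H0 r by linarith
    have od: "b \<le> r / K + sqrt (r * E2)" unfolding b_def E2_def
      by (rule ondiag[OF Kpos]) (use r H_def in simp)
    define c where "c = r / real m"
    have cnn: "0 \<le> c" unfolding c_def using rpos mpos by simp
    have a1: "r / K \<le> 2 * c"
    proof -
      have "r / K \<le> r / (real m / 2)" using Km mpos rpos by (intro divide_left_mono) auto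
      then show ?thesis unfolding c_def by (simp add: mult.commute)
    qed
    have a2: "r * E2 \<le> c * b"
    proof -
      have "r * E2 \<le> r * (b / real m)" using E2b rpos by (intro mult_left_mono) auto
      then show ?thesis unfolding c_def by simp
    qed
    have "b \<le> 2 * c + sqrt (c * b)" using od a1 real_sqrt_le_mono[OF a2] by linarith
    then have b4: "b \<le> 4 * c" by (rule quad_bound[OF bnn cnn])
    have "E1 \<le> 4 * c / real m" using E1b b4 mpos by (smt (verit) divide_right_mono)
    also have "\<dots> = 4 * r / (real m)^2" unfolding c_def by (simp add: power2_eq_square)
    finally have "E1 \<le> 4 * r / (real m)^2" .
    then have "R * E1 \<le> R * (4 * r / (real m)^2)" using Rnn by (rule mult_left_mono)
    also have "\<dots> \<le> R * (12 * r / (real m)^2)" using Rnn rpos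
      by (intro mult_left_mono divide_right_mono) auto
    also have "\<dots> = (12 * R / (real m)^2) * r" by simp
    finally show ?thesis using X1 by linarith
  qed
  have "X \<le> (12 * R / (real m)^2) * H"
    by (rule eps_arg[OF _ key]) (use Rnn in simp)
  then show ?thesis unfolding X_def R_def H_def K_def by simp
qed

end


theorem proposition4p4:
  fixes mu :: "'a \<Rightarrow> 'a \<Rightarrow> real" and \<rho> :: 'a and m :: nat
  assumes "weighted_graph mu" and "1 \<le> m"
  shows "\<forall>x y. (qker mu \<rho> m x - qker mu \<rho> m y)^2
           \<le> 12 * resistance mu x y * hinv mu \<rho> (of_int \<lceil>real m / 2\<rceil>) / (real m)^2"
proof -
  interpret wg mu by unfold_locales (rule assms(1))
  show ?thesis using main[OF assms(2)] by (simp add: qker_QQ)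
qed

end
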